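(* Let $\alpha$ be a unit speed Frenet curve in $\mathbb{E}^3$ with curvature $\kappa$, let $\beta$ be an osculating mate of $\alpha$, and let $\theta(s)=\int\kappa(s)ds$ be the antiderivative of $\kappa$ with $\beta'=\sin\theta\,T+\cos\theta\,N$. Then $\beta$ is a rectifying curve if and only if $\tan\theta(s)$ is a linear function of $s$, i.e. $\tan\theta(s)=a_1s+a_2$ for real constants $a_1\neq0$, $a_2$.
   Context: $\alpha:I\to\mathbb{E}^3$ is parametrized by arclength $s$, with Frenet frame $\{T,N,B\}$, curvature $\kappa>0$, torsion $\tau$. An osculating mate of $\alpha$ is a curve $\beta(s)=\int(x_1T+x_2N)ds$ with smooth $x_1,x_2$, $x_1^2+x_2^2=1$ and $\beta''\perp\mathrm{span}\{T,N\}$; $\beta$ is assumed to be a Frenet curve, unit speed in $s$, with Frenet frame $\{\bar T,\bar N,\bar B\}$. Being given by an indefinite integral, $\beta$ is determined up to a translation, and "$\beta$ is rectifying" is understood for a suitable choice of this integration constant. A Frenet curve is rectifying if its position vector always lies in its rectifying plane $\mathrm{span}\{\bar T,\bar B\}$; for a unit speed curve with curvature $\bar\kappa$ and torsion $\bar\tau$ this is characterized (up to translation) by $\bar\tau/\bar\kappa=\frac1c(s+b)$ for real constants $c\neq0$, $b$. *)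

theory Defs
  imports "HOL-Analysis.Analysis"
begin

definition smooth_fun_on :: "real set \<Rightarrow> (real \<Rightarrow> real) \<Rightarrow> bool" where
  "smooth_fun_on I f \<longleftrightarrow> (\<forall>k::nat. \<forall>s\<in>I. ((deriv ^^ k) f) differentiable (at s))"

definition frenet_curve_on ::
  "real set \<Rightarrow> (real \<Rightarrow> real^3) \<Rightarrow> (real \<Rightarrow> real^3) \<Rightarrow> (real \<Rightarrow> real^3)
     \<Rightarrow> (real \<Rightarrow> real^3) \<Rightarrow> (real \<Rightarrow> real) \<Rightarrow> (real \<Rightarrow> real) \<Rightarrow> bool" where
  "frenet_curve_on I g T N B k t \<longleftrightarrow>
     (\<forall>s\<in>I.
        (g has_vector_derivative T s) (at s) \<and>
        (T has_vector_derivative (k s *\<^sub>R N s)) (at s) \<and>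
        (N has_vector_derivative (- (k s *\<^sub>R T s) + t s *\<^sub>R B s)) (at s) \<and>
        (B has_vector_derivative (- (t s *\<^sub>R N s))) (at s) \<and>
        norm (T s) = 1 \<and> norm (N s) = 1 \<and> inner (T s) (N s) = 0 \<and>
        B s = cross3 (T s) (N s) \<and> k s > 0)"

definition osculating_mate_on ::
  "real set \<Rightarrow> (real \<Rightarrow> real^3) \<Rightarrow> (real \<Rightarrow> real^3) \<Rightarrow> (real \<Rightarrow> real^3)
     \<Rightarrow> (real \<Rightarrow> real) \<Rightarrow> (real \<Rightarrow> real) \<Rightarrow> bool" where
  "osculating_mate_on I T N beta x1 x2 \<longleftrightarrow>
     smooth_fun_on I x1 \<and> smooth_fun_on I x2 \<and>
     (\<forall>s\<in>I.
        (x1 s)\<^sup>2 + (x2 s)\<^sup>2 = 1 \<and>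
        (beta has_vector_derivative (x1 s *\<^sub>R T s + x2 s *\<^sub>R N s)) (at s) \<and>
        (\<lambda>u. x1 u *\<^sub>R T u + x2 u *\<^sub>R N u) differentiable (at s) \<and>
        inner (vector_derivative (\<lambda>u. x1 u *\<^sub>R T u + x2 u *\<^sub>R N u) (at s)) (T s) = 0 \<and>
        inner (vector_derivative (\<lambda>u. x1 u *\<^sub>R T u + x2 u *\<^sub>R N u) (at s)) (N s) = 0)"

text \<open>A curve with Frenet frame {Tb, Nb, Bb} is rectifying (up to the choice of
  the translation/integration constant C): its position vector always lies in
  the rectifying plane span{Tb, Bb}.\<close>
definition rectifying_on ::
  "real set \<Rightarrow> (real \<Rightarrow> real^3) \<Rightarrow> (real \<Rightarrow> real^3) \<Rightarrow> (real \<Rightarrow> real^3) \<Rightarrow> bool" where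
  "rectifying_on I g Tb Bb \<longleftrightarrow> (\<exists>C. \<forall>s\<in>I. g s + C \<in> span {Tb s, Bb s})"

end

theory Submission
  imports Defs
begin

lemma cross_cross3: "cross3 (x::real^3) (cross3 y z) = (x \<bullet> z) *\<^sub>R y - (x \<bullet> y) *\<^sub>R z"
  by (simp add: cross3_simps forall_3)

lemma const_on_interval:
  fixes f :: "real \<Rightarrow> 'b::real_normed_vector"
  assumes "is_interval I" "\<And>x. x \<in> I \<Longrightarrow> (f has_vector_derivative 0) (at x)"
  shows "\<exists>c. \<forall>x\<in>I. f x = c"
proof (rule has_derivative_zero_constant)
  show "convex I" using assms(1) by (simp add: is_interval_convex)
  fix x assume "x \<in> I"
  then have "(f has_derivative (\<lambda>h. h *\<^sub>R 0)) (at x)" using assms(2) by (simp add: has_vector_derivative_def)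
  then show "(f has_derivative (\<lambda>h. 0)) (at x within I)" by (simp add: has_derivative_at_withinI)
qed

lemma zero_deriv_zero:
  assumes "open I" "s \<in> I" "\<And>x. x \<in> I \<Longrightarrow> f x = (0::real)" "(f has_real_derivative D) (at s)"
  shows "D = 0"
proof -
  have "((\<lambda>_. 0::real) has_real_derivative D) (at s)"
    by (rule has_field_derivative_transform_within_open[OF assms(4) assms(1) assms(2)]) (simp add: assms(3))
  then show ?thesis using DERIV_const DERIV_unique by blast
qed

lemma inner_deriv:
  fixes f g :: "real \<Rightarrow> real^3"
  assumes "(f has_vector_derivative f') (at s)" "(g has_vector_derivative g') (at s)"
  shows "((\<lambda>u. inner (f u) (g u)) has_real_derivative (inner (f s) g' + inner f' (g s))) (at s)"
  unfolding has_real_derivative_iff_has_vector_derivative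
  by (rule bounded_bilinear.has_vector_derivative[OF bounded_bilinear_inner assms])


theorem theorem7:
  fixes I :: "real set"
    and alpha beta T N B Tb Nb Bb :: "real \<Rightarrow> real^3"
    and \<kappa> \<tau> \<kappa>b \<tau>b x1 x2 \<theta> :: "real \<Rightarrow> real"
  assumes "open I" and "is_interval I" and "I \<noteq> {}"
    and "frenet_curve_on I alpha T N B \<kappa> \<tau>"
    and "osculating_mate_on I T N beta x1 x2"
    and "frenet_curve_on I beta Tb Nb Bb \<kappa>b \<tau>b"
    and "\<forall>s\<in>I. (\<theta> has_real_derivative \<kappa> s) (at s)"
    and "\<forall>s\<in>I. x1 s = sin (\<theta> s) \<and> x2 s = cos (\<theta> s)"
  shows "rectifying_on I beta Tb Bb \<longleftrightarrow>
         (\<exists>a1 a2. a1 \<noteq> 0 \<and> (\<forall>s\<in>I. tan (\<theta> s) = a1 * s + a2))"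
proof -
  note FA = assms(4)[unfolded frenet_curve_on_def, rule_format]
  note FB = assms(6)[unfolded frenet_curve_on_def, rule_format]
  note OM = assms(5)[unfolded osculating_mate_on_def]
  have th: "(\<theta> has_real_derivative \<kappa> s) (at s)" if "s \<in> I" for s using assms(7) that by blast
  have Tb_eq: "Tb s = sin (\<theta> s) *\<^sub>R T s + cos (\<theta> s) *\<^sub>R N s" if "s \<in> I" for s
  proof -
    have "(beta has_vector_derivative (x1 s *\<^sub>R T s + x2 s *\<^sub>R N s)) (at s)" using OM that by blast
    moreover have "(beta has_vector_derivative Tb s) (at s)" using FB that by blast
    ultimately show ?thesis using vector_derivative_unique_at assms(8) that by metis
  qed
  have orth: "T s \<bullet> T s = 1" "N s \<bullet> N s = 1" "T s \<bullet> N s = 0" "N s \<bullet> T s = 0"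
     "B s \<bullet> T s = 0" "B s \<bullet> N s = 0" "T s \<bullet> B s = 0" "N s \<bullet> B s = 0"
     "Tb s \<bullet> Nb s = 0" "Bb s \<bullet> Nb s = 0"
    if "s \<in> I" for s
  proof -
    have "norm (T s) = 1" "norm (N s) = 1" "T s \<bullet> N s = 0" "B s = cross3 (T s) (N s)" 
      "norm (Tb s) = 1" "norm (Nb s) = 1" "Tb s \<bullet> Nb s = 0" "Bb s = cross3 (Tb s) (Nb s)"
      using FA[OF that] FB[OF that] by auto
    then show "T s \<bullet> T s = 1" "N s \<bullet> N s = 1" "T s \<bullet> N s = 0" "N s \<bullet> T s = 0"
     "B s \<bullet> T s = 0" "B s \<bullet> N s = 0" "T s \<bullet> B s = 0" "N s \<bullet> B s = 0"
     "Tb s \<bullet> Nb s = 0" "Bb s \<bullet> Nb s = 0"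
      by (auto simp: dot_cross_self inner_commute norm_eq_1)
  qed
  have F2: "\<kappa>b s *\<^sub>R Nb s = (\<tau> s * cos (\<theta> s)) *\<^sub>R B s" if "s \<in> I" for s
  proof -
    have "((\<lambda>u. sin (\<theta> u) *\<^sub>R T u + cos (\<theta> u) *\<^sub>R N u) has_vector_derivative
       (sin (\<theta> s) *\<^sub>R (\<kappa> s *\<^sub>R N s) + (cos (\<theta> s) * \<kappa> s) *\<^sub>R T s
        + (cos (\<theta> s) *\<^sub>R (- (\<kappa> s *\<^sub>R T s) + \<tau> s *\<^sub>R B s) + (- sin (\<theta> s) * \<kappa> s) *\<^sub>R N s))) (at s)"
      using FA[OF that] th[OF that]
      by (intro derivative_intros) (auto intro!: derivative_eq_intros)
    then have "((\<lambda>u. sin (\<theta> u) *\<^sub>R T u + cos (\<theta> u) *\<^sub>R N u) has_vector_derivative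
       ((\<tau> s * cos (\<theta> s)) *\<^sub>R B s)) (at s)"
      by (simp add: algebra_simps)
    then have "(Tb has_vector_derivative ((\<tau> s * cos (\<theta> s)) *\<^sub>R B s)) (at s)"
      by (rule has_vector_derivative_transform_within_open[OF _ assms(1) that]) (simp add: Tb_eq)
    moreover have "(Tb has_vector_derivative (\<kappa>b s *\<^sub>R Nb s)) (at s)" using FB[OF that] by blast
    ultimately show ?thesis using vector_derivative_unique_at by metis
  qed
  have nz: "cos (\<theta> s) \<noteq> 0" "\<tau> s \<noteq> 0" if "s \<in> I" for s
  proof -
    have "norm (\<kappa>b s *\<^sub>R Nb s) = \<kappa>b s" using FB[OF that] by simp
    then have "(\<tau> s * cos (\<theta> s)) *\<^sub>R B s \<noteq> 0" using F2[OF that] FB[OF that] by auto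
    then show "cos (\<theta> s) \<noteq> 0" "\<tau> s \<noteq> 0" by auto
  qed
  have F4: "Nb s = ((\<tau> s * cos (\<theta> s)) / \<kappa>b s) *\<^sub>R B s" if "s \<in> I" for s
  proof -
    have "\<kappa>b s > 0" using FB[OF that] by blast
    then have "Nb s = inverse (\<kappa>b s) *\<^sub>R (\<kappa>b s *\<^sub>R Nb s)" by simp
    also have "\<dots> = ((\<tau> s * cos (\<theta> s)) / \<kappa>b s) *\<^sub>R B s" using F2[OF that] by (simp add: divide_inverse_commute)
    finally show ?thesis .
  qed
  show ?thesis
  proof
    assume "rectifying_on I beta Tb Bb"
    then obtain C where C: "\<And>s. s \<in> I \<Longrightarrow> beta s + C \<in> span {Tb s, Bb s}"
      unfolding rectifying_on_def by blast
    define P where "P u = beta u + C" for u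
    have dP: "(P has_vector_derivative Tb s) (at s)" if "s \<in> I" for s
      unfolding P_def using FB[OF that] by (auto intro!: derivative_eq_intros)
    have PNb: "P s \<bullet> Nb s = 0" if "s \<in> I" for s
    proof -
      have "orthogonal (Nb s) (P s)"
        by (rule orthogonal_to_span[OF C[OF that, folded P_def]])
           (use orth[OF that] in \<open>auto simp: orthogonal_def inner_commute\<close>)
      then show ?thesis by (simp add: orthogonal_def inner_commute)
    qed
    have PB: "P s \<bullet> B s = 0" if "s \<in> I" for s
    proof -
      have "\<kappa>b s > 0" using FB[OF that] by blast
      have "0 = P s \<bullet> Nb s" using PNb[OF that] by simp
      also have "\<dots> = ((\<tau> s * cos (\<theta> s)) / \<kappa>b s) * (P s \<bullet> B s)" by (simp add: F4[OF that])
      finally show ?thesis using nz[OF that] \<open>\<kappa>b s > 0\<close> by simp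
    qed
    have PN: "P s \<bullet> N s = 0" if "s \<in> I" for s
    proof -
      have "((\<lambda>u. P u \<bullet> B u) has_real_derivative (P s \<bullet> (- (\<tau> s *\<^sub>R N s)) + Tb s \<bullet> B s)) (at s)"
        by (rule inner_deriv[OF dP[OF that]]) (use FA[OF that] in blast)
      then have "P s \<bullet> (- (\<tau> s *\<^sub>R N s)) + Tb s \<bullet> B s = 0"
        by (rule zero_deriv_zero[OF assms(1) that PB, rotated])
      then show ?thesis using nz[OF that] orth[OF that] Tb_eq[OF that]
        by (simp add: inner_add_left inner_add_right inner_commute)
    qed
    have PT: "\<kappa> s * (P s \<bullet> T s) = cos (\<theta> s)" if "s \<in> I" for s
    proof -
      have "((\<lambda>u. P u \<bullet> N u) has_real_derivative (P s \<bullet> (- (\<kappa> s *\<^sub>R T s) + \<tau> s *\<^sub>R B s) + Tb s \<bullet> N s)) (at s)"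
        by (rule inner_deriv[OF dP[OF that]]) (use FA[OF that] in blast)
      then have "P s \<bullet> (- (\<kappa> s *\<^sub>R T s) + \<tau> s *\<^sub>R B s) + Tb s \<bullet> N s = 0"
        by (rule zero_deriv_zero[OF assms(1) that PN, rotated])
      then show ?thesis using PB[OF that] orth[OF that] Tb_eq[OF that]
        by (simp add: inner_add_left inner_add_right inner_diff_right inner_commute)
    qed
    define g where "g u = cos (\<theta> u) * (P u \<bullet> T u)" for u
    have dg: "(g has_vector_derivative 0) (at s)" if "s \<in> I" for s
    proof -
      have "((\<lambda>u. P u \<bullet> T u) has_real_derivative (P s \<bullet> (\<kappa> s *\<^sub>R N s) + Tb s \<bullet> T s)) (at s)"
        by (rule inner_deriv[OF dP[OF that]]) (use FA[OF that] in blast)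
      then have "((\<lambda>u. P u \<bullet> T u) has_real_derivative sin (\<theta> s)) (at s)"
        using PN[OF that] orth[OF that] Tb_eq[OF that]
        by (simp add: inner_add_left inner_add_right inner_commute)
      then have "(g has_real_derivative (cos (\<theta> s) * sin (\<theta> s) + (- sin (\<theta> s) * \<kappa> s) * (P s \<bullet> T s))) (at s)"
        unfolding g_def using th[OF that] by (auto intro!: derivative_eq_intros)
      moreover have "cos (\<theta> s) * sin (\<theta> s) + (- sin (\<theta> s) * \<kappa> s) * (P s \<bullet> T s)
          = sin (\<theta> s) * (cos (\<theta> s) - \<kappa> s * (P s \<bullet> T s))" by (simp add: algebra_simps)
      ultimately have "(g has_real_derivative sin (\<theta> s) * (cos (\<theta> s) - \<kappa> s * (P s \<bullet> T s))) (at s)"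
        by simp
      then show ?thesis unfolding PT[OF that]
        by (simp add: has_real_derivative_iff_has_vector_derivative[symmetric])
    qed
    obtain K where K: "\<And>s. s \<in> I \<Longrightarrow> g s = K" using const_on_interval[OF assms(2) dg] by blast
    have gval: "g s = (cos (\<theta> s))\<^sup>2 / \<kappa> s" if "s \<in> I" for s
    proof -
      have "\<kappa> s > 0" using FA[OF that] by blast
      then show ?thesis using PT[OF that] unfolding g_def by (simp add: field_simps power2_eq_square)
    qed
    obtain s0 where s0: "s0 \<in> I" using assms(3) by blast
    have Kpos: "K > 0"
    proof -
      have "\<kappa> s0 > 0" using FA[OF s0] by blast
      then show ?thesis using K[OF s0] gval[OF s0] nz[OF s0] by (metis divide_pos_pos zero_less_power2)
    qed
    define h where "h u = tan (\<theta> u) - u / K" for u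
    have dh: "(h has_vector_derivative 0) (at s)" if "s \<in> I" for s
    proof -
      have "(h has_real_derivative (\<kappa> s * inverse ((cos (\<theta> s))\<^sup>2) - 1 / K)) (at s)"
        unfolding h_def using th[OF that] nz[OF that] Kpos by (auto intro!: derivative_eq_intros)
      moreover have "\<kappa> s * inverse ((cos (\<theta> s))\<^sup>2) - 1 / K = 0"
      proof -
        have "\<kappa> s > 0" using FA[OF that] by blast
        then show ?thesis using K[OF that] gval[OF that] nz[OF that] Kpos by (simp add: field_simps)
      qed
      ultimately show ?thesis by (simp add: has_real_derivative_iff_has_vector_derivative[symmetric])
    qed
    obtain a2 where a2: "\<And>s. s \<in> I \<Longrightarrow> h s = a2" using const_on_interval[OF assms(2) dh] by blast
    show "\<exists>a1 a2. a1 \<noteq> 0 \<and> (\<forall>s\<in>I. tan (\<theta> s) = a1 * s + a2)"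
      using a2 Kpos by (intro exI[of _ "1/K"] exI[of _ a2]) (auto simp: h_def field_simps)
  next
    assume "\<exists>a1 a2. a1 \<noteq> 0 \<and> (\<forall>s\<in>I. tan (\<theta> s) = a1 * s + a2)"
    then obtain a1 a2 where a1: "a1 \<noteq> 0" and tn: "\<And>s. s \<in> I \<Longrightarrow> tan (\<theta> s) = a1 * s + a2" by blast
    have ka: "\<kappa> s = a1 * (cos (\<theta> s))\<^sup>2" if "s \<in> I" for s
    proof -
      have "((\<lambda>u. tan (\<theta> u)) has_real_derivative (inverse ((cos (\<theta> s))\<^sup>2) * \<kappa> s)) (at s)"
        using th[OF that] nz[OF that] by (auto intro!: derivative_eq_intros)
      moreover have "((\<lambda>u. tan (\<theta> u)) has_real_derivative a1) (at s)"
      proof -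
        have "((\<lambda>u. a1 * u + a2) has_real_derivative a1) (at s)" by (auto intro!: derivative_eq_intros)
        then show ?thesis
          by (rule has_field_derivative_transform_within_open[OF _ assms(1) that]) (simp add: tn)
      qed
      ultimately have "inverse ((cos (\<theta> s))\<^sup>2) * \<kappa> s = a1" using DERIV_unique by blast
      then show ?thesis using nz[OF that] by (simp add: field_simps)
    qed
    define f where "f u = 1 / (a1 * cos (\<theta> u))" for u
    define Q where "Q u = f u *\<^sub>R T u - beta u" for u
    have dQ: "(Q has_vector_derivative 0) (at s)" if "s \<in> I" for s
    proof -
      have "(f has_real_derivative (a1 * (sin (\<theta> s) * \<kappa> s)) / (a1 * cos (\<theta> s))\<^sup>2) (at s)"
        unfolding f_def using th[OF that] nz[OF that] a1
        by (auto intro!: derivative_eq_intros simp: power2_eq_square)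
      moreover have "(a1 * (sin (\<theta> s) * \<kappa> s)) / (a1 * cos (\<theta> s))\<^sup>2 = sin (\<theta> s)"
        using ka[OF that] a1 nz[OF that] by (simp add: field_simps power2_eq_square)
      ultimately have df: "(f has_real_derivative sin (\<theta> s)) (at s)" by simp
      have "(Q has_vector_derivative (f s *\<^sub>R (\<kappa> s *\<^sub>R N s) + sin (\<theta> s) *\<^sub>R T s - Tb s)) (at s)"
        unfolding Q_def using df FA[OF that] FB[OF that]
        by (intro derivative_intros) auto
      moreover have "f s *\<^sub>R (\<kappa> s *\<^sub>R N s) + sin (\<theta> s) *\<^sub>R T s - Tb s = 0"
      proof -
        have "f s * \<kappa> s = cos (\<theta> s)"
          unfolding f_def using ka[OF that] a1 nz[OF that] by (simp add: field_simps power2_eq_square)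
        then show ?thesis using Tb_eq[OF that] by simp
      qed
      ultimately show ?thesis by simp
    qed
    obtain C where C: "\<And>s. s \<in> I \<Longrightarrow> Q s = C" using const_on_interval[OF assms(2) dQ] by blast
    show "rectifying_on I beta Tb Bb"
      unfolding rectifying_on_def
    proof (intro exI[of _ C] ballI)
      fix s assume s: "s \<in> I"
      have bC: "beta s + C = f s *\<^sub>R T s" using C[OF s] unfolding Q_def by (simp add: algebra_simps)
      define lam where "lam = (\<tau> s * cos (\<theta> s)) / \<kappa>b s"
      have lam0: "lam \<noteq> 0" using nz[OF s] FB[OF s] unfolding lam_def by auto
      have BT: "B s = cross3 (T s) (N s)" using FA[OF s] by blast
      have "Bb s = cross3 (Tb s) (Nb s)" using FB[OF s] by blast
      also have "\<dots> = lam *\<^sub>R (cos (\<theta> s) *\<^sub>R T s - sin (\<theta> s) *\<^sub>R N s)"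
        unfolding Tb_eq[OF s] F4[OF s, folded lam_def] BT
        using orth[OF s]
        by (simp add: cross_add_left cross_mult_left cross_mult_right cross_cross3 algebra_simps)
      finally have Bbe: "Bb s = lam *\<^sub>R (cos (\<theta> s) *\<^sub>R T s - sin (\<theta> s) *\<^sub>R N s)" .
      have "T s = sin (\<theta> s) *\<^sub>R Tb s + (cos (\<theta> s) / lam) *\<^sub>R Bb s"
      proof -
        have e: "(cos (\<theta> s) * cos (\<theta> s)) *\<^sub>R T s + (sin (\<theta> s) * sin (\<theta> s)) *\<^sub>R T s = T s"
          by (metis scaleR_add_left sin_cos_squared_add power2_eq_square add.commute scaleR_one)
        show ?thesis
          unfolding Tb_eq[OF s] Bbe using lam0 e
          by (simp add: algebra_simps power2_eq_square)
      qed
      then have "T s \<in> span {Tb s, Bb s}"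
        by (metis span_add span_scale span_base insertI1 insertI2 singletonI)
      then show "beta s + C \<in> span {Tb s, Bb s}" unfolding bC by (rule span_scale)
    qed
  qed
qed

end
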